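(* Let $n\in\mathbb{N}$ and $1\leq p<\infty$. Then (1) for every $f\in S_n^p$, $\|f\|_{\infty}\leq\pi\|f\|_{S_1^p}\leq\pi^2\|f\|_{S_2^p}\leq\cdots\leq\pi^n\|f\|_{S_n^p}$; (2) $S_n^p\subset S_{n-1}^p\subset\cdots\subset S_1^p\subset H^\infty$.
   Context: $\mathbb{D}$ is the open unit disk, $H(\mathbb{D})$ the analytic functions on $\mathbb{D}$, $H^p$ the Hardy space on $\mathbb{D}$, $H^\infty$ the bounded analytic functions with $\|f\|_\infty=\sup_{z\in\mathbb{D}}|f(z)|$. For $k\in\mathbb{N}$, $S_k^p=\{f\in H(\mathbb{D}): f^{(k)}\in H^p\}$ with norm defined recursively by $\|f\|_{S_k^p}=|f(0)|+\|f'\|_{S_{k-1}^p}$, where $S_0^p=H^p$. *)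

theory Defs
  imports "HOL-Analysis.Analysis"
begin

definition hp_mean :: "real \<Rightarrow> (complex \<Rightarrow> complex) \<Rightarrow> real \<Rightarrow> real" where
  "hp_mean p f r =
     (1 / (2 * pi) * integral {0..2*pi} (\<lambda>t. cmod (f (of_real r * cis t)) powr p)) powr (1 / p)"

definition in_Hp :: "real \<Rightarrow> (complex \<Rightarrow> complex) \<Rightarrow> bool" where
  "in_Hp p f \<longleftrightarrow> f holomorphic_on ball 0 1 \<and> bdd_above (hp_mean p f ` {0<..<1})"

definition Hp_norm :: "real \<Rightarrow> (complex \<Rightarrow> complex) \<Rightarrow> real" where
  "Hp_norm p f = (SUP r\<in>{0<..<1}. hp_mean p f r)"

definition in_Hinf :: "(complex \<Rightarrow> complex) \<Rightarrow> bool" where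
  "in_Hinf f \<longleftrightarrow> f holomorphic_on ball 0 1 \<and> bounded (f ` ball 0 1)"

definition sup_norm :: "(complex \<Rightarrow> complex) \<Rightarrow> real" where
  "sup_norm f = (SUP z\<in>ball 0 1. cmod (f z))"

definition in_S :: "nat \<Rightarrow> real \<Rightarrow> (complex \<Rightarrow> complex) \<Rightarrow> bool" where
  "in_S k p f \<longleftrightarrow> f holomorphic_on ball 0 1 \<and> in_Hp p ((deriv ^^ k) f)"

fun S_norm :: "nat \<Rightarrow> real \<Rightarrow> (complex \<Rightarrow> complex) \<Rightarrow> real" where
  "S_norm 0 p f = Hp_norm p f"
| "S_norm (Suc k) p f = cmod (f 0) + S_norm k p (deriv f)"

end

theory Submission
  imports Defs "HOL-Complex_Analysis.Complex_Analysis"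
begin

lemma Re_pos_not_nonpos: "Re z > 0 \<Longrightarrow> z \<notin> \<real>\<^sub>\<le>\<^sub>0"
  by (auto simp: complex_nonpos_Reals_iff)

lemma core_F:
  fixes f :: "complex \<Rightarrow> complex"
  assumes hol: "f holomorphic_on ball 0 1" and r: "0 < r" "r < 1" and w: "norm w < r"
  shows "integral {0..2*pi} (\<lambda>t. deriv f (of_real r * cis t) * Ln (1 - w / (of_real r * cis t)) * (of_real r * \<i> * cis t))
         = - (2 * of_real pi * \<i>) * (f w - f 0)"
proof -
  define g where "g = deriv f"
  have gh: "g holomorphic_on ball 0 1" unfolding g_def by (rule holomorphic_deriv[OF hol open_ball])
  have fder: "(f has_field_derivative g z) (at z)" if "z \<in> ball 0 1" for z
    unfolding g_def using holomorphic_derivI[OF hol open_ball that] .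
  define \<zeta> where "\<zeta> t = of_real r * cis t" for t
  have nz: "norm (\<zeta> t) = r" for t using r by (simp add: \<zeta>_def norm_mult)
  have zin: "\<zeta> t \<in> ball 0 1" for t using nz r by simp
  have contg: "continuous_on (ball 0 1) g" using gh holomorphic_on_imp_continuous_on by blast
  have contz: "continuous_on A \<zeta>" for A unfolding \<zeta>_def by (intro continuous_intros)
  have contgz: "continuous_on A (\<lambda>t. g (\<zeta> t))" for A
    by (rule continuous_on_compose2[OF contg contz]) (use zin in auto)
  define U where "U = ball (0::complex) r"
  define h where "h w t = g (\<zeta> t) * Ln (1 - w / \<zeta> t) * (of_real r * \<i> * cis t)" for w t
  define h' where "h' w t = g (\<zeta> t) * (- 1 / (\<zeta> t - w)) * (of_real r * \<i> * cis t)" for w t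
  have znz: "\<zeta> t \<noteq> 0" for t using nz[of t] r by auto
  have Repos: "Re (1 - w / \<zeta> t) > 0" if "w \<in> U" for w t
  proof -
    have "norm (w / \<zeta> t) < 1" using that nz r by (simp add: U_def norm_divide)
    hence "Re (w / \<zeta> t) < 1" using complex_Re_le_cmod[of "w / \<zeta> t"] by linarith
    thus ?thesis by simp
  qed
  have ne: "\<zeta> t - w \<noteq> 0" if "w \<in> U" for w t using that nz by (auto simp: U_def)
  have hder: "((\<lambda>w. h w t) has_field_derivative h' w t) (at w within U)" if "w \<in> U" for w t
  proof -
    have "((\<lambda>w. Ln (1 - w / \<zeta> t)) has_field_derivative (inverse (1 - w / \<zeta> t) * (- 1 / \<zeta> t))) (at w within U)"
      using Re_pos_not_nonpos[OF Repos[OF that, of t]] znz[of t]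
      by (auto intro!: derivative_eq_intros)
    moreover have "inverse (1 - w / \<zeta> t) * (- 1 / \<zeta> t) = - 1 / (\<zeta> t - w)"
      using znz[of t] ne[OF that, of t] by (simp add: field_simps)
    ultimately have dL: "((\<lambda>w. Ln (1 - w / \<zeta> t)) has_field_derivative (- 1 / (\<zeta> t - w))) (at w within U)"
      by simp
    show ?thesis unfolding h_def h'_def
      using DERIV_cmult_right[OF DERIV_cmult[OF dL, of "g (\<zeta> t)"], of "of_real r * \<i> * cis t"] .

  qed
  have hint: "h w integrable_on cbox 0 (2*pi)" if "w \<in> U" for w
    unfolding h_def using that Repos
    by (intro integrable_continuous continuous_intros contgz) (auto intro!: Re_pos_not_nonpos contz simp: znz)
  have conth': "continuous_on (U \<times> cbox 0 (2*pi)) (\<lambda>(w, t). h' w t)"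
  proof -
    have c1: "continuous_on (U \<times> cbox 0 (2*pi)) (\<lambda>x. g (\<zeta> (snd x)))"
      by (rule continuous_on_compose2[OF contgz[of UNIV] continuous_on_snd]) auto
    have c2: "continuous_on (U \<times> cbox 0 (2*pi)) (\<lambda>x. \<zeta> (snd x))"
      by (rule continuous_on_compose2[OF contz[of UNIV] continuous_on_snd]) auto
    show ?thesis unfolding h'_def split_beta
      using ne by (intro continuous_intros c1 c2) auto
  qed
  have Fder: "((\<lambda>w. integral (cbox 0 (2*pi)) (h w)) has_field_derivative integral (cbox 0 (2*pi)) (h' w)) (at w within U)"
    if "w \<in> U" for w
    by (rule leibniz_rule_field_derivative[OF hder hint conth' that]) (auto simp: U_def)
  have h'int: "integral (cbox 0 (2*pi)) (h' w) = - (2 * of_real pi * \<i> * g w)" if "w \<in> U" for w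
  proof -
    have "g holomorphic_on cball 0 r" by (rule holomorphic_on_subset[OF gh]) (use r in auto)
    from Cauchy_integral_circlepath_simple[OF this, of w] that
    have "((\<lambda>u. g u / (u - w)) has_contour_integral 2 * of_real pi * \<i> * g w) (part_circlepath 0 r 0 (2*pi))"
      by (simp add: U_def circlepath_def)
    hence "((\<lambda>t. g (0 + r * cis t) / (0 + r * cis t - w) * r * \<i> * cis t) has_integral 2 * of_real pi * \<i> * g w) {0..2*pi}"
      by (subst (asm) has_contour_integral_part_circlepath_iff) auto
    from has_integral_neg[OF this]
    have "((\<lambda>x. - (g (\<zeta> x) * complex_of_real r * \<i> * cis x / (\<zeta> x - w))) has_integral - (2 * of_real pi * \<i> * g w)) {0..2*pi}"
      by (simp add: \<zeta>_def[symmetric])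
    moreover have "(\<lambda>x. - (g (\<zeta> x) * complex_of_real r * \<i> * cis x / (\<zeta> x - w))) = h' w"
      using ne[OF that] by (intro ext) (simp add: h'_def field_simps)
    ultimately have "(h' w has_integral - (2 * of_real pi * \<i> * g w)) {0..2*pi}" by simp
    thus ?thesis by (simp add: integral_unique)
  qed
  define D where "D w = integral (cbox 0 (2*pi)) (h w) + 2 * of_real pi * \<i> * f w" for w
  have "(D has_field_derivative 0) (at x within U)" if "x \<in> U" for x
  proof -
    have "x \<in> ball 0 1" using that r by (auto simp: U_def)
    from fder[OF this] have "(f has_field_derivative g x) (at x within U)"
      by (rule has_field_derivative_at_within)
    from DERIV_add[OF Fder[OF that] DERIV_cmult[OF this, of "2 * of_real pi * \<i>"]]
    show ?thesis unfolding D_def h'int[OF that] by simp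
  qed
  then obtain c where c: "\<And>x. x \<in> U \<Longrightarrow> D x = c"
    using has_field_derivative_zero_constant[of U D] by (auto simp: U_def)
  have "D w = D 0" using c[of w] c[of 0] w r by (simp add: U_def)
  moreover have "h 0 = (\<lambda>t. 0)" by (simp add: h_def fun_eq_iff)
  hence "integral (cbox 0 (2*pi)) (h 0) = 0" by simp
  ultimately have "integral (cbox 0 (2*pi)) (h w) = - (2 * of_real pi * \<i>) * (f w - f 0)"
    unfolding D_def by (simp add: algebra_simps)
  moreover have "h w = (\<lambda>t. deriv f (of_real r * cis t) * Ln (1 - w / (of_real r * cis t)) * (of_real r * \<i> * cis t))"
    by (simp add: h_def g_def \<zeta>_def fun_eq_iff)
  ultimately show ?thesis by simp
qed

lemma core_G:
  fixes f :: "complex \<Rightarrow> complex"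
  assumes hol: "f holomorphic_on ball 0 1" and r: "0 < r" "r < 1" and w: "norm w < r"
  shows "integral {0..2*pi} (\<lambda>t. deriv f (of_real r * cis t) * Ln (1 - cnj w * (of_real r * cis t) / of_real (r^2)) * (of_real r * \<i> * cis t))
         = 0"
proof -
  define g where "g = deriv f"
  have gh: "g holomorphic_on ball 0 1" unfolding g_def by (rule holomorphic_deriv[OF hol open_ball])
  define S where "S = ball 0 1 \<inter> {z. w \<bullet> z < r^2}"
  have cS: "convex S" unfolding S_def by (intro convex_Int convex_ball convex_halfspace_lt)
  have re: "Re (cnj w * z) = w \<bullet> z" for z by (simp add: inner_complex_def)
  have hS: "(\<lambda>z. g z * Ln (1 - cnj w * z / of_real (r^2))) holomorphic_on S"
  proof (intro holomorphic_intros)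
    show "g holomorphic_on S" by (rule holomorphic_on_subset[OF gh]) (auto simp: S_def)
    fix z assume "z \<in> S"
    hence "w \<bullet> z < r^2" by (auto simp: S_def)
    hence "Re (cnj w * z) < r^2" by (simp only: re)
    hence "Re (cnj w * z) / r^2 < 1" using r by (simp add: divide_less_eq)
    hence "Re (1 - cnj w * z / of_real (r^2)) > 0" by (simp add: Re_divide_of_real)
    thus "1 - cnj w * z / of_real (r^2) \<notin> \<real>\<^sub>\<le>\<^sub>0" by (rule Re_pos_not_nonpos)
  next
    show "complex_of_real (r\<^sup>2) \<noteq> 0" if "z \<in> S" for z using r by simp
  qed
  have sub: "path_image (circlepath 0 r) \<subseteq> S"
  proof
    fix z assume "z \<in> path_image (circlepath 0 r)"
    hence nz: "norm z = r" using r by auto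
    have "w \<bullet> z \<le> norm w * norm z" by (rule norm_cauchy_schwarz)
    also have "\<dots> < r * r" using nz w r by simp
    finally show "z \<in> S" using nz r by (auto simp: S_def power2_eq_square)
  qed
  have "((\<lambda>z. g z * Ln (1 - cnj w * z / of_real (r^2))) has_contour_integral 0) (circlepath 0 r)"
    by (rule Cauchy_theorem_convex_simple[OF hS cS _ sub]) auto
  hence "((\<lambda>z. g z * Ln (1 - cnj w * z / of_real (r^2))) has_contour_integral 0) (part_circlepath 0 r 0 (2*pi))"
    by (simp add: circlepath_def)
  hence "((\<lambda>t. g (0 + r * cis t) * Ln (1 - cnj w * (0 + r * cis t) / of_real (r^2)) * r * \<i> * cis t) has_integral 0) {0..2*pi}"
    by (subst (asm) has_contour_integral_part_circlepath_iff) auto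
  hence "integral {0..2*pi} (\<lambda>t. g (0 + r * cis t) * Ln (1 - cnj w * (0 + r * cis t) / of_real (r^2)) * r * \<i> * cis t) = 0"
    by (rule integral_unique)
  thus ?thesis by (simp add: g_def mult.assoc)
qed

lemma core_bound:
  fixes f :: "complex \<Rightarrow> complex"
  assumes hol: "f holomorphic_on ball 0 1" and r: "0 < r" "r < 1" and w: "norm w < r"
  shows "norm (f w - f 0) \<le> 1/2 * integral {0..2*pi} (\<lambda>t. norm (deriv f (of_real r * cis t)))"
proof -
  define g where "g = deriv f"
  have gh: "g holomorphic_on ball 0 1" unfolding g_def by (rule holomorphic_deriv[OF hol open_ball])
  define \<zeta> where "\<zeta> t = of_real r * cis t" for t
  have nz: "norm (\<zeta> t) = r" for t using r by (simp add: \<zeta>_def norm_mult)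
  have zin: "\<zeta> t \<in> ball 0 1" for t using nz r by simp
  have znz: "\<zeta> t \<noteq> 0" for t using nz[of t] r by auto
  have contg: "continuous_on (ball 0 1) g" using gh holomorphic_on_imp_continuous_on by blast
  have contz: "continuous_on A \<zeta>" for A unfolding \<zeta>_def by (intro continuous_intros)
  have contgz: "continuous_on A (\<lambda>t. g (\<zeta> t))" for A
    by (rule continuous_on_compose2[OF contg contz]) (use zin in auto)
  define a where "a t = 1 - cnj w * \<zeta> t / of_real (r^2)" for t
  have Rea: "Re (a t) > 0" for t
  proof -
    have "norm (cnj w * \<zeta> t / of_real (r^2)) = norm w * r / r^2"
      using r nz[of t] by (simp add: norm_mult norm_divide norm_power)
    also have "\<dots> < 1" using w r by (simp add: power2_eq_square divide_less_eq)
    finally have "Re (cnj w * \<zeta> t / of_real (r^2)) < 1"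
      using complex_Re_le_cmod[of "cnj w * \<zeta> t / of_real (r^2)"] by linarith
    thus ?thesis by (simp add: a_def)
  qed
  have acnj: "1 - w / \<zeta> t = cnj (a t)" for t
  proof -
    have "\<zeta> t * cnj (\<zeta> t) = of_real (r^2)" using nz[of t] by (simp add: complex_norm_square[symmetric])
    hence "w / \<zeta> t = w * cnj (\<zeta> t) / of_real (r^2)" using znz[of t] r
      by (simp add: field_simps)
    thus ?thesis by (simp add: a_def)
  qed
  have kb: "norm (Ln (1 - w / \<zeta> t) - Ln (a t)) \<le> pi" for t
  proof -
    have nn: "a t \<notin> \<real>\<^sub>\<le>\<^sub>0" by (rule Re_pos_not_nonpos[OF Rea])
    have "Ln (1 - w / \<zeta> t) - Ln (a t) = cnj (Ln (a t)) - Ln (a t)"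
      by (simp add: acnj cnj_Ln[OF nn])
    also have "\<dots> = - (complex_of_real (2 * Im (Ln (a t))) * \<i>)"
      by (simp add: complex_eq_iff)
    finally have "norm (Ln (1 - w / \<zeta> t) - Ln (a t)) = 2 * \<bar>Im (Ln (a t))\<bar>"
      by (simp add: norm_mult)
    also have "\<dots> \<le> pi" using Re_Ln_pos_lt_imp[OF Rea[of t]] by simp
    finally show ?thesis .
  qed
  define A where "A t = g (\<zeta> t) * Ln (1 - w / \<zeta> t) * (of_real r * \<i> * cis t)" for t
  define B where "B t = g (\<zeta> t) * Ln (a t) * (of_real r * \<i> * cis t)" for t
  have conta: "continuous_on S a" for S
    unfolding a_def using r by (intro continuous_intros contz) auto
  have contca: "continuous_on S (\<lambda>t. cnj (a t))" for S
    by (intro continuous_intros conta)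
  have Aint: "A integrable_on {0..2*pi}"
    unfolding A_def acnj
    by (intro integrable_continuous_interval continuous_intros contgz contca)
      (auto intro!: Re_pos_not_nonpos simp: Rea)
  have Bint: "B integrable_on {0..2*pi}"
    unfolding B_def
    by (intro integrable_continuous_interval continuous_intros contgz conta)
      (auto intro!: Re_pos_not_nonpos Rea)
  have "A = (\<lambda>t. deriv f (of_real r * cis t) * Ln (1 - w / (of_real r * cis t)) * (of_real r * \<i> * cis t))"
    by (simp add: fun_eq_iff A_def g_def \<zeta>_def)
  hence "integral {0..2*pi} A = - (2 * of_real pi * \<i>) * (f w - f 0)"
    using core_F[OF hol r w] by simp
  moreover have "B = (\<lambda>t. deriv f (of_real r * cis t) * Ln (1 - cnj w * (of_real r * cis t) / of_real (r^2)) * (of_real r * \<i> * cis t))"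
    by (simp add: fun_eq_iff B_def g_def \<zeta>_def a_def)
  hence "integral {0..2*pi} B = 0"
    using core_G[OF hol r w] by simp
  ultimately have eq: "integral {0..2*pi} (\<lambda>t. A t - B t) = - (2 * of_real pi * \<i>) * (f w - f 0)"
    using integral_diff[OF Aint Bint] by simp
  have ngint: "(\<lambda>t. pi * norm (g (\<zeta> t))) integrable_on {0..2*pi}"
    by (intro integrable_continuous_interval continuous_intros contgz)
  have "norm (integral {0..2*pi} (\<lambda>t. A t - B t)) \<le> integral {0..2*pi} (\<lambda>t. pi * norm (g (\<zeta> t)))"
  proof (rule integral_norm_bound_integral[OF integrable_diff[OF Aint Bint] ngint])
    fix t
    have "norm (A t - B t) = norm (g (\<zeta> t)) * norm (Ln (1 - w / \<zeta> t) - Ln (a t)) * r"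
      using r by (simp add: A_def B_def norm_mult flip: ring_distribs(1) right_diff_distrib left_diff_distrib)
    also have "\<dots> \<le> norm (g (\<zeta> t)) * pi * 1"
      using kb[of t] r by (intro mult_mono) auto
    finally show "norm (A t - B t) \<le> pi * norm (g (\<zeta> t))" by (simp add: mult.commute)
  qed
  also have "\<dots> = pi * integral {0..2*pi} (\<lambda>t. norm (g (\<zeta> t)))" by simp
  finally have "2 * pi * norm (f w - f 0) \<le> pi * integral {0..2*pi} (\<lambda>t. norm (g (\<zeta> t)))"
    unfolding eq by (simp add: norm_mult)
  thus ?thesis by (simp add: g_def \<zeta>_def)
qed

lemma mean_le:
  fixes u :: "real \<Rightarrow> real"
  assumes cont: "continuous_on {0..2*pi} u" and nn: "\<And>t. u t \<ge> 0" and p: "p \<ge> 1"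
  shows "1/(2*pi) * integral {0..2*pi} u \<le> (1/(2*pi) * integral {0..2*pi} (\<lambda>t. u t powr p)) powr (1/p)"
proof (cases "p = 1")
  case True
  have "integral {0..2*pi} u \<ge> 0"
    by (rule integral_nonneg[OF integrable_continuous_interval[OF cont]]) (use nn in auto)
  thus ?thesis using True nn by simp
next
  case False
  hence p1: "p > 1" using p by simp
  define q where "q = p / (p - 1)"
  have q1: "q > 1" using p1 by (simp add: q_def)
  have pq: "1/p + 1/q = 1" using p1 by (simp add: q_def field_simps)
  have pq2: "(p - 1) * q = p" using p1 by (simp add: q_def field_simps)
  define I where "I = integral {0..2*pi} u"
  define J where "J = integral {0..2*pi} (\<lambda>t. u t powr p)"
  have uint: "u integrable_on {0..2*pi}" by (rule integrable_continuous_interval[OF cont])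
  have contp: "continuous_on {0..2*pi} (\<lambda>t. u t powr p)"
    using p1 nn by (intro continuous_on_powr' cont continuous_intros) auto
  have upint: "(\<lambda>t. u t powr p) integrable_on {0..2*pi}" by (rule integrable_continuous_interval[OF contp])
  have J0: "J \<ge> 0" unfolding J_def by (rule integral_nonneg[OF upint]) auto
  define M where "M = (J / (2*pi)) powr (1/p)"
  have M0: "M \<ge> 0" by (simp add: M_def)
  have Mp: "M powr p = J / (2*pi)" using J0 p1 by (simp add: M_def powr_powr)
  have key: "I / (2*pi) \<le> c" if c0: "c > 0" and cM: "c \<ge> M" for c
  proof -
    have pw: "u t * c powr (p-1) \<le> u t powr p / p + c powr p / q" for t
      using Youngs_inequality[OF p1 q1 pq nn[of t], of "c powr (p-1)"] by (simp add: powr_powr pq2)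
    have i1: "(\<lambda>t. u t * c powr (p-1)) integrable_on {0..2*pi}" by (intro integrable_on_mult_left uint)
    have i2: "(\<lambda>t. u t powr p / p + c powr p / q) integrable_on {0..2*pi}"
      by (intro integrable_add integrable_on_divide upint integrable_const_ivl)
    have "integral {0..2*pi} (\<lambda>t. u t * c powr (p-1)) \<le> integral {0..2*pi} (\<lambda>t. u t powr p / p + c powr p / q)"
      by (rule integral_le[OF i1 i2]) (use pw in auto)
    moreover have "integral {0..2*pi} (\<lambda>t. u t powr p / p + c powr p / q) = J / p + 2 * pi * (c powr p / q)"
      by (subst integral_add) (auto intro!: integrable_on_divide upint simp: integral_divide J_def)
    moreover have "integral {0..2*pi} (\<lambda>t. u t * c powr (p-1)) = I * c powr (p-1)"
      by (simp add: I_def)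
    ultimately have "I * c powr (p-1) \<le> J / p + 2 * pi * (c powr p / q)"
      unfolding I_def by simp
    moreover have "J \<le> 2 * pi * c powr p"
    proof -
      have "M powr p \<le> c powr p" using M0 cM p1 by (intro powr_mono2) auto
      thus ?thesis using Mp by (simp add: field_simps)
    qed
    moreover have "J / p \<le> 2 * pi * c powr p / p" using p1 by (intro divide_right_mono) (use calculation in auto)
    ultimately have "I * c powr (p-1) \<le> 2 * pi * c powr p / p + 2 * pi * (c powr p / q)"
      by linarith
    also have "\<dots> = 2 * pi * c powr p * (1/p + 1/q)" by (simp add: field_simps)
    finally have "I * c powr (p-1) \<le> 2 * pi * c powr p * (1/p + 1/q)" .
    also have "\<dots> = 2 * pi * c * c powr (p-1)" using pq c0
      by (simp add: powr_add[of c "p-1" 1, simplified])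
    finally have "I * c powr (p-1) \<le> (2 * pi * c) * c powr (p-1)" by simp
    hence "I \<le> 2 * pi * c" using c0 by (simp add: mult_le_cancel_right)
    thus ?thesis by (simp add: field_simps)
  qed
  have "I / (2*pi) \<le> M"
  proof (rule field_le_epsilon)
    fix e :: real assume "e > 0"
    thus "I / (2*pi) \<le> M + e" using key[of "M + e"] M0 by simp
  qed
  thus ?thesis by (simp add: I_def J_def M_def)
qed

lemma key_pt:
  fixes f :: "complex \<Rightarrow> complex"
  assumes hol: "f holomorphic_on ball 0 1" and hp: "in_Hp p (deriv f)" and p: "p \<ge> 1"
    and z: "z \<in> ball 0 1"
  shows "norm (f z) \<le> norm (f 0) + pi * Hp_norm p (deriv f)"
proof -
  define r where "r = (norm z + 1) / 2"
  have nz0: "norm z < 1" using z by simp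
  have nn0: "0 \<le> norm z" by simp
  have r1: "0 < r" unfolding r_def using add_pos_nonneg[OF zero_less_one nn0] by (simp add: field_simps)
  have r2: "r < 1" unfolding r_def using nz0 by (simp add: field_simps)
  have r3: "norm z < r" unfolding r_def using nz0 by (simp add: field_simps)
  note r = r1 r2 r3
  define g where "g = deriv f"
  have gh: "g holomorphic_on ball 0 1" unfolding g_def by (rule holomorphic_deriv[OF hol open_ball])
  have contg: "continuous_on (ball 0 1) g" using gh holomorphic_on_imp_continuous_on by blast
  have contu: "continuous_on {0..2*pi} (\<lambda>t. norm (g (of_real r * cis t)))"
    by (intro continuous_intros continuous_on_compose2[OF contg]) (use r in \<open>auto simp: norm_mult\<close>)
  have "norm (f z - f 0) \<le> 1/2 * integral {0..2*pi} (\<lambda>t. norm (g (of_real r * cis t)))"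
    using core_bound[OF hol r] by (simp add: g_def)
  also have "\<dots> = pi * (1/(2*pi) * integral {0..2*pi} (\<lambda>t. norm (g (of_real r * cis t))))"
    by simp
  also have "\<dots> \<le> pi * hp_mean p g r"
    unfolding hp_mean_def by (intro mult_left_mono mean_le[OF contu _ p]) auto
  also have "hp_mean p g r \<le> Hp_norm p g"
    unfolding Hp_norm_def using hp r by (intro cSUP_upper) (auto simp: in_Hp_def g_def)
  hence "pi * hp_mean p g r \<le> pi * Hp_norm p g" by simp
  finally have "norm (f z - f 0) \<le> pi * Hp_norm p (deriv f)" by (simp add: g_def)
  moreover have "norm (f z) \<le> norm (f z - f 0) + norm (f 0)" using norm_triangle_sub[of "f z" "f 0"] by linarith
  ultimately show ?thesis by simp
qed

lemma Hp_of_bounded: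
  fixes g :: "complex \<Rightarrow> complex"
  assumes hol: "g holomorphic_on ball 0 1" and B: "\<And>z. z \<in> ball 0 1 \<Longrightarrow> norm (g z) \<le> B" and p: "p \<ge> 1"
  shows "in_Hp p g \<and> Hp_norm p g \<le> B"
proof -
  have B0: "B \<ge> 0" using B[of 0] norm_ge_zero[of "g 0"] by (simp add: order_trans[OF norm_ge_zero])
  have contg: "continuous_on (ball 0 1) g" using hol holomorphic_on_imp_continuous_on by blast
  have hm: "hp_mean p g r \<le> B" if r: "r \<in> {0<..<1}" for r
  proof -
    have inb: "of_real r * cis t \<in> ball 0 1" for t using r by (simp add: norm_mult)
    have contu: "continuous_on {0..2*pi} (\<lambda>t. norm (g (of_real r * cis t)) powr p)"
      using p by (intro continuous_on_powr' continuous_intros continuous_on_compose2[OF contg])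
        (use inb in auto)
    have "integral {0..2*pi} (\<lambda>t. norm (g (of_real r * cis t)) powr p) \<le> integral {0..2*pi} (\<lambda>t. B powr p)"
      by (rule integral_le[OF integrable_continuous_interval[OF contu]])
         (use p in \<open>auto intro!: powr_mono2 B inb\<close>)
    hence "1/(2*pi) * integral {0..2*pi} (\<lambda>t. norm (g (of_real r * cis t)) powr p) \<le> B powr p"
      using pi_gt_zero by (simp add: pos_divide_le_eq algebra_simps)
    moreover have "0 \<le> integral {0..2*pi} (\<lambda>t. norm (g (of_real r * cis t)) powr p)"
      by (rule integral_nonneg[OF integrable_continuous_interval[OF contu]]) auto
    ultimately have "hp_mean p g r \<le> (B powr p) powr (1/p)"
      unfolding hp_mean_def using p by (intro powr_mono2) auto
    also have "\<dots> = B" using B0 p by (simp add: powr_powr)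
    finally show ?thesis .
  qed
  have bdd: "bdd_above (hp_mean p g ` {0<..<1})" using hm by (intro bdd_aboveI[of _ B]) auto
  have "Hp_norm p g \<le> B" unfolding Hp_norm_def using hm by (intro cSUP_least) auto
  with bdd hol show ?thesis by (simp add: in_Hp_def)
qed

lemma KEY:
  fixes f :: "complex \<Rightarrow> complex"
  assumes hol: "f holomorphic_on ball 0 1" and hp: "in_Hp p (deriv f)" and p: "p \<ge> 1"
  shows "in_Hinf f \<and> sup_norm f \<le> pi * S_norm 1 p f \<and> in_Hp p f \<and> Hp_norm p f \<le> pi * S_norm 1 p f"
proof -
  define C where "C = norm (f 0) + pi * Hp_norm p (deriv f)"
  have pt: "norm (f z) \<le> C" if "z \<in> ball 0 1" for z using key_pt[OF hol hp p that] by (simp add: C_def)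
  have C1: "C \<le> pi * S_norm 1 p f"
  proof -
    have "norm (f 0) \<le> pi * norm (f 0)" using pi_ge_two by (simp add: mult_le_cancel_right1 )
    thus ?thesis by (simp add: C_def algebra_simps)
  qed
  have bd: "bounded (f ` ball 0 1)" unfolding bounded_iff by (intro exI[of _ C]) (auto intro: pt)
  have "sup_norm f \<le> C" unfolding sup_norm_def using pt by (intro cSUP_least) auto
  moreover have "in_Hp p f \<and> Hp_norm p f \<le> C" by (rule Hp_of_bounded[OF hol pt p])
  ultimately show ?thesis using bd hol C1 by (auto simp: in_Hinf_def)
qed

lemma deriv_pow_hol:
  assumes "f holomorphic_on ball 0 1"
  shows "(deriv ^^ k) f holomorphic_on ball 0 1"
  by (induction k) (auto intro: holomorphic_deriv assms)

lemma in_S_Suc: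
  assumes "in_S (Suc k) p f" and p: "p \<ge> 1"
  shows "in_S k p f"
proof -
  have hol: "f holomorphic_on ball 0 1" and hp: "in_Hp p (deriv ((deriv ^^ k) f))"
    using assms by (auto simp: in_S_def)
  from KEY[OF deriv_pow_hol[OF hol] hp p] hol show ?thesis by (simp add: in_S_def)
qed

lemma in_S_down:
  assumes "in_S (k + m) p f" and p: "p \<ge> 1"
  shows "in_S k p f"
  using assms(1)
proof (induction m)
  case 0 thus ?case by simp
next
  case (Suc m) thus ?case using in_S_Suc[of "k + m" p f] p by simp
qed

lemma chain:
  assumes p: "p \<ge> 1"
  shows "f holomorphic_on ball 0 1 \<Longrightarrow> in_Hp p ((deriv ^^ Suc k) f) \<Longrightarrow> S_norm k p f \<le> pi * S_norm (Suc k) p f"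
proof (induction k arbitrary: f)
  case 0
  thus ?case using KEY[OF 0(1) _ p] by simp
next
  case (Suc k)
  have hd: "deriv f holomorphic_on ball 0 1" using Suc.prems(1) by (intro holomorphic_deriv) auto
  have "in_Hp p ((deriv ^^ Suc k) (deriv f))"
    using Suc.prems(2) by (simp only: funpow_Suc_right[of "Suc k"] o_def)
  from Suc.IH[OF hd this]
  have "S_norm k p (deriv f) \<le> pi * S_norm (Suc k) p (deriv f)" .
  moreover have "norm (f 0) \<le> pi * norm (f 0)" using pi_ge_two by (simp add: mult_le_cancel_right1)
  ultimately show ?case by (simp add: algebra_simps)
qed

theorem proposition3p2:
  fixes n :: nat and p :: real
  assumes "n \<ge> 1" and "1 \<le> p"
  shows "(\<forall>f. in_S n p f \<longrightarrow>
            sup_norm f \<le> pi * S_norm 1 p f \<and>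
            (\<forall>k. 1 \<le> k \<and> k < n \<longrightarrow> pi ^ k * S_norm k p f \<le> pi ^ (k + 1) * S_norm (k + 1) p f))
       \<and> (\<forall>k. 1 \<le> k \<and> k < n \<longrightarrow> {f. in_S (k + 1) p f} \<subseteq> {f. in_S k p f})
       \<and> {f. in_S 1 p f} \<subseteq> {f. in_Hinf f}"
proof (intro conjI allI impI)
  fix f assume f: "in_S n p f"
  have s1: "in_S 1 p f" using in_S_down[of 1 "n - 1" p f] f assms by simp
  thus "sup_norm f \<le> pi * S_norm 1 p f"
    using KEY[of f p] assms by (simp add: in_S_def)
  fix k assume k: "1 \<le> k \<and> k < n"
  have "in_S (Suc k) p f" using in_S_down[of "Suc k" "n - Suc k" p f] f assms k by simp
  hence "S_norm k p f \<le> pi * S_norm (Suc k) p f"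
    using chain[OF assms(2)] by (simp add: in_S_def)
  hence "pi ^ k * S_norm k p f \<le> pi ^ k * (pi * S_norm (Suc k) p f)"
    by (intro mult_left_mono) auto
  thus "pi ^ k * S_norm k p f \<le> pi ^ (k + 1) * S_norm (k + 1) p f" by (simp add: algebra_simps)
next
  fix k assume "1 \<le> k \<and> k < n"
  show "{f. in_S (k + 1) p f} \<subseteq> {f. in_S k p f}" using in_S_Suc assms(2) by auto
next
  show "{f. in_S 1 p f} \<subseteq> {f. in_Hinf f}" using KEY assms(2) by (auto simp: in_S_def)
qed

end
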